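(* Let $k\ge 2$, $\boldsymbol\mu\in\mathbb{R}^k$, $\boldsymbol\Sigma$ a symmetric positive definite $k\times k$ matrix, $\mathbf{1}\in\mathbb{R}^k$ and $\mathbf{1}_n\in\mathbb{R}^n$ vectors of ones, and $\mathbf{Q}=\boldsymbol\Sigma^{-1}-\dfrac{\boldsymbol\Sigma^{-1}\mathbf{1}\mathbf{1}'\boldsymbol\Sigma^{-1}}{\mathbf{1}'\boldsymbol\Sigma^{-1}\mathbf{1}}$. Let $n\ge 2$, $\alpha_1,\dots,\alpha_n>0$, $\beta_1,\dots,\beta_n>0$ with $\sum_i\beta_i=1$, $\phi_1,\dots,\phi_n>0$; set $\boldsymbol\beta=(\beta_1,\dots,\beta_n)'$, $\mathbf{A}_0=\mathrm{diag}(\alpha_i)$, $\boldsymbol\Phi=\mathrm{diag}(\phi_i)$, $\mathbf{B}=\mathrm{diag}(\beta_i)$, $\bar\phi=\sum_i\beta_i\phi_i$, $\mathbf{A}=(\mathbf{A}_0+\boldsymbol\Phi)\mathbf{B}+(\bar\phi\mathbf{I}_n-2\boldsymbol\Phi)\boldsymbol\beta\boldsymbol\beta'$, $\mathbf{A}_\phi=(\mathbf{A}+\mathbf{A}')/2$. Let $\mathcal{W}^*$ be the maximizer over $k\times n$ matrices $\mathbf{W}$ of $\boldsymbol\beta'\mathbf{W}'\boldsymbol\mu-\frac12\operatorname{tr}(\mathbf{A}\mathbf{W}'\boldsymbol\Sigma\mathbf{W})$ subject to $\mathbf{W}'\mathbf{1}=\mathbf{1}_n$, namely $\mathcal{W}^*=\frac{\boldsymbol\Sigma^{-1}\mathbf{1}}{\mathbf{1}'\boldsymbol\Sigma^{-1}\mathbf{1}}\mathbf{1}_n'+\mathbf{Q}\boldsymbol\mu(\boldsymbol\beta'\mathbf{A}_\phi^{-1})$,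 and let $\boldsymbol\omega^*_{\mathbf f}=\mathcal{W}^*\boldsymbol\beta$ be the optimal fund weight vector. Then: (a) If the $\alpha_i$ are pairwise distinct and $\beta_i=1/n$ for all $i$, then $\mathbf{A}=n^{-2}\tilde{\mathbf{A}}$ with $\tilde{\mathbf{A}}=n(\mathbf{A}_0+\boldsymbol\Phi)+(\bar\phi\mathbf{I}_n-2\boldsymbol\Phi)\mathbf{1}_n\mathbf{1}_n'$ (here $\bar\phi=\frac1n\sum_i\phi_i$), and, with $\tilde{\mathbf{A}}_\phi=(\tilde{\mathbf{A}}+\tilde{\mathbf{A}}')/2$, $$\boldsymbol\omega^*_{\mathbf f}=\frac{\boldsymbol\Sigma^{-1}\mathbf{1}}{\mathbf{1}'\boldsymbol\Sigma^{-1}\mathbf{1}}+\mathbf{Q}\boldsymbol\mu\,(\mathbf{1}_n'\tilde{\mathbf{A}}_\phi^{-1}\mathbf{1}_n).$$ (b) If the $\alpha_i$ are pairwise distinct and $\phi_i=\phi>0$ for all $i$, then $\mathbf{A}=(\mathbf{A}_0+\phi\mathbf{I}_n)\mathbf{B}-\phi\boldsymbol\beta\boldsymbol\beta'$, which is symmetric and positive definite, and $$\boldsymbol\omega^*_{\mathbf f}=\frac{\boldsymbol\Sigma^{-1}\mathbf{1}}{\mathbf{1}'\boldsymbol\Sigma^{-1}\mathbf{1}}+\mathbf{Q}\boldsymbol\mu\,(\boldsymbol\beta'\mathbf{A}^{-1}\boldsymbol\beta).$$ (c) If $\alpha_i=\alpha$ and $\phi_i=\phi$ for all $i$, then $\boldsymbol\omega^*_{\mathbf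 f}$ coincides with the non-mimicking optimal fund weights $\boldsymbol\omega_{\mathbf f}=\frac{\boldsymbol\Sigma^{-1}\mathbf{1}}{\mathbf{1}'\boldsymbol\Sigma^{-1}\mathbf{1}}+\alpha_{\mathbf f}^{-1}\mathbf{Q}\boldsymbol\mu$ with $\alpha_{\mathbf f}=(\mathbf{1}_n'\mathbf{A}_0^{-1}\boldsymbol\beta)^{-1}$, i.e. $\boldsymbol\omega^*_{\mathbf f}=\frac{\boldsymbol\Sigma^{-1}\mathbf{1}}{\mathbf{1}'\boldsymbol\Sigma^{-1}\mathbf{1}}+\alpha^{-1}\mathbf{Q}\boldsymbol\mu$.
   Context: $\boldsymbol\mu,\boldsymbol\Sigma$ are the mean and covariance of returns of $k$ risky assets; $n$ investors have risk aversions $\alpha_i$, wealth shares $\beta_i$ and mimicking coefficients $\phi_i$; the objective is the wealth-weighted sum of the investors' mean-variance objectives, each penalized by $\frac{\phi_i}{2}(\mathbf{w}_i-\mathbf{W}\boldsymbol\beta)'\boldsymbol\Sigma(\mathbf{w}_i-\mathbf{W}\boldsymbol\beta)$, where $\mathbf{w}_i$ is column $i$ of $\mathbf{W}$. The vector $\boldsymbol\omega_{\mathbf f}$ is the maximizer of $\sum_i\beta_i(\mathbf{w}_i'\boldsymbol\mu-\frac{\alpha_i}{2}\mathbf{w}_i'\boldsymbol\Sigma\mathbf{w}_i)$ aggregated as $\mathbf{W}\boldsymbol\beta$ (no mimicking). *)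

theory Defs
  imports "HOL-Analysis.Analysis"
begin

definition ones :: "real^'n" where
  "ones = (\<chi> i. 1)"

definition diagm :: "real^'n \<Rightarrow> real^'n^'n" where
  "diagm d = (\<chi> i j. if i = j then d$i else 0)"

definition outer :: "real^'m \<Rightarrow> real^'n \<Rightarrow> real^'n^'m" where
  "outer u v = (\<chi> i j. u$i * v$j)"

definition sym_pos_def :: "real^'n^'n \<Rightarrow> bool" where
  "sym_pos_def M \<longleftrightarrow> transpose M = M \<and> (\<forall>x. x \<noteq> 0 \<longrightarrow> x \<bullet> (M *v x) > 0)"

definition gmv :: "real^'k^'k \<Rightarrow> real^'k" where
  "gmv Sig = (1 / (ones \<bullet> (matrix_inv Sig *v ones))) *\<^sub>R (matrix_inv Sig *v ones)"

definition Qmat :: "real^'k^'k \<Rightarrow> real^'k^'k" where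
  "Qmat Sig = matrix_inv Sig
     - (1 / (ones \<bullet> (matrix_inv Sig *v ones))) *\<^sub>R
         outer (matrix_inv Sig *v ones) (ones v* matrix_inv Sig)"

definition phibar :: "real^'n \<Rightarrow> real^'n \<Rightarrow> real" where
  "phibar beta phi = (\<Sum>i\<in>UNIV. beta$i * phi$i)"

definition Amat :: "real^'n \<Rightarrow> real^'n \<Rightarrow> real^'n \<Rightarrow> real^'n^'n" where
  "Amat alpha beta phi =
     (diagm alpha + diagm phi) ** diagm beta
     + (phibar beta phi *\<^sub>R mat 1 - 2 *\<^sub>R diagm phi) ** outer beta beta"

definition symm_part :: "real^'n^'n \<Rightarrow> real^'n^'n" where
  "symm_part M = (1/2) *\<^sub>R (M + transpose M)"

definition Wstar :: "real^'k^'k \<Rightarrow> real^'k \<Rightarrow> real^'n \<Rightarrow> real^'n \<Rightarrow> real^'n \<Rightarrow> real^'n^'k" where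
  "Wstar Sig mu alpha beta phi =
     outer (gmv Sig) ones
     + outer (Qmat Sig *v mu) (beta v* matrix_inv (symm_part (Amat alpha beta phi)))"

definition omega_star :: "real^'k^'k \<Rightarrow> real^'k \<Rightarrow> real^'n \<Rightarrow> real^'n \<Rightarrow> real^'n \<Rightarrow> real^'k" where
  "omega_star Sig mu alpha beta phi = Wstar Sig mu alpha beta phi *v beta"

definition Atilde :: "real^'n \<Rightarrow> real^'n \<Rightarrow> real^'n^'n" where
  "Atilde alpha phi =
     real CARD('n) *\<^sub>R (diagm alpha + diagm phi)
     + (((1 / real CARD('n)) * (\<Sum>i\<in>UNIV. phi$i)) *\<^sub>R mat 1 - 2 *\<^sub>R diagm phi) ** outer ones ones"

definition alpha_f :: "real^'n \<Rightarrow> real^'n \<Rightarrow> real" where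
  "alpha_f alpha beta = inverse (ones \<bullet> (matrix_inv (diagm alpha) *v beta))"

definition omega_f :: "real^'k^'k \<Rightarrow> real^'k \<Rightarrow> real^'n \<Rightarrow> real^'n \<Rightarrow> real^'k" where
  "omega_f Sig mu alpha beta = gmv Sig + inverse (alpha_f alpha beta) *\<^sub>R (Qmat Sig *v mu)"

end

theory Submission
  imports Defs
begin



lemma Amat_entry: "Amat alpha beta phi $ i $ j =
   (if i = j then (alpha$i + phi$i) * beta$i else 0) + (phibar beta phi - 2 * phi$i) * (beta$i * beta$j)"
  unfolding Amat_def
  by (simp add: matrix_matrix_mult_def diagm_def outer_def mat_def mult_delta_left mult_delta_right
       left_diff_distrib sum_subtractf sum.delta)

lemma Amat_mulv: "Amat alpha beta phi *v x =
   (\<chi> i. (alpha$i + phi$i) * beta$i * x$i + (phibar beta phi - 2 * phi$i) * beta$i * (beta \<bullet> x))"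
  apply (simp add: vec_eq_iff matrix_vector_mult_def Amat_entry distrib_right distrib_left sum.distrib
        mult_delta_left mult_delta_right
        sum.delta inner_vec_def sum_distrib_left mult_ac)
  by (simp add: sum_distrib_left[symmetric] sum_distrib_right mult_ac)



lemma quad_Amat:
  "x \<bullet> (Amat alpha beta phi *v x) =
   (\<Sum>i\<in>UNIV. alpha$i * beta$i * (x$i)^2) + (\<Sum>i\<in>UNIV. phi$i * beta$i * (x$i - beta \<bullet> x)^2)"
proof -
  define s where "s = beta \<bullet> x"
  have s: "s = (\<Sum>i\<in>UNIV. beta$i * x$i)" unfolding s_def inner_vec_def by simp
  have pb: "phibar beta phi = (\<Sum>i\<in>UNIV. phi$i * beta$i)" unfolding phibar_def by (simp add: mult_ac)
  have "x \<bullet> (Amat alpha beta phi *v x) = (\<Sum>i\<in>UNIV. x$i * ((alpha$i + phi$i) * beta$i * x$i + (phibar beta phi - 2 * phi$i) * beta$i * s))"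
    unfolding Amat_mulv inner_vec_def s_def by simp
  also have "\<dots> = (\<Sum>i\<in>UNIV. alpha$i * beta$i * (x$i)^2) + (\<Sum>i\<in>UNIV. phi$i * beta$i * (x$i)^2)
      + phibar beta phi * s * (\<Sum>i\<in>UNIV. beta$i * x$i) - 2 * s * (\<Sum>i\<in>UNIV. phi$i * beta$i * x$i)"
    by (simp add: algebra_simps power2_eq_square sum.distrib sum_subtractf sum_distrib_left)
  also have "\<dots> = (\<Sum>i\<in>UNIV. alpha$i * beta$i * (x$i)^2) + (\<Sum>i\<in>UNIV. phi$i * beta$i * (x$i - s)^2)"
    unfolding s[symmetric] pb
    by (simp add: algebra_simps power2_eq_square sum.distrib sum_subtractf sum_distrib_left sum_distrib_right)
  finally show ?thesis unfolding s_def .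
qed

lemma quad_pos:
  assumes "\<forall>i. alpha$i > 0" "\<forall>i. beta$i > 0" "\<forall>i. phi$i > 0" "x \<noteq> 0"
  shows "x \<bullet> (Amat alpha beta phi *v x) > 0"
proof -
  obtain j where j: "x$j \<noteq> 0" using assms(4) by (metis vec_eq_iff zero_index)
  have "0 < alpha$j * beta$j * (x$j)^2" using assms j by simp
  also have "\<dots> \<le> (\<Sum>i\<in>UNIV. alpha$i * beta$i * (x$i)^2)"
    by (rule member_le_sum) (use assms in \<open>auto intro!: mult_nonneg_nonneg simp: less_imp_le\<close>)
  also have "\<dots> \<le> (\<Sum>i\<in>UNIV. alpha$i * beta$i * (x$i)^2) + (\<Sum>i\<in>UNIV. phi$i * beta$i * (x$i - beta \<bullet> x)^2)"
    by (simp add: sum_nonneg assms less_imp_le)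
  finally show ?thesis unfolding quad_Amat .
qed

lemma quad_symm: "x \<bullet> (symm_part M *v x) = x \<bullet> ((M::real^'n^'n) *v x)"
proof -
  have "symm_part M *v x = (1/2) *\<^sub>R (M *v x + x v* M)"
    unfolding symm_part_def
    by (simp add: matrix_vector_mult_def vector_matrix_mult_def transpose_def vec_eq_iff algebra_simps sum.distrib sum_divide_distrib)
  moreover have "x \<bullet> (x v* M) = x \<bullet> (M *v x)" by (metis dot_lmul_matrix inner_commute)
  ultimately show ?thesis by (simp add: inner_add_right)
qed

lemma pd_invertible:
  assumes "\<forall>x. x \<noteq> 0 \<longrightarrow> x \<bullet> ((M::real^'n^'n) *v x) > 0"
  shows "invertible M"
  unfolding invertible_left_inverse matrix_left_invertible_ker
  using assms by (metis inner_zero_right less_irrefl)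

lemma matrix_inv_props:
  assumes "invertible (M::real^'n^'n)"
  shows "M ** matrix_inv M = mat 1" "matrix_inv M ** M = mat 1"
  using someI_ex[OF assms[unfolded invertible_def]] unfolding matrix_inv_def by auto

lemma matrix_inv_solve:
  assumes "invertible (M::real^'n^'n)" "M *v z = y"
  shows "matrix_inv M *v y = z"
  using matrix_inv_props(2)[OF assms(1)] assms(2)
  by (metis matrix_vector_mul_assoc matrix_vector_mul_lid)

lemma outer_mulv: "outer u w *v b = (w \<bullet> b) *\<^sub>R u"
  by (simp add: outer_def matrix_vector_mult_def vec_eq_iff inner_vec_def sum_distrib_left mult_ac)

lemma omega_star_eq:
  assumes "(\<Sum>i\<in>UNIV. beta$i) = 1"
  shows "omega_star Sig mu alpha beta phi =
     gmv Sig + (beta \<bullet> (matrix_inv (symm_part (Amat alpha beta phi)) *v beta)) *\<^sub>R (Qmat Sig *v mu)"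
proof -
  have "ones \<bullet> beta = 1" using assms by (simp add: ones_def inner_vec_def)
  then show ?thesis
    unfolding omega_star_def Wstar_def
    by (simp add: matrix_vector_mult_add_rdistrib outer_mulv dot_lmul_matrix)
qed



lemma Atilde_entry: "Atilde alpha phi $ i $ j =
   (if i = j then real CARD('n) * (alpha$i + phi$i) else 0) + ((1 / real CARD('n)) * (\<Sum>k\<in>UNIV. phi$k) - 2 * phi$i)"
  for alpha phi :: "real^'n"
  unfolding Atilde_def
  by (simp add: matrix_matrix_mult_def diagm_def outer_def ones_def mat_def mult_delta_left mult_delta_right
       left_diff_distrib sum_subtractf sum.delta)

lemma symm_part_scale: "symm_part (c *\<^sub>R M) = c *\<^sub>R symm_part (M::real^'n^'n)"
  unfolding symm_part_def by (simp add: vec_eq_iff transpose_def algebra_simps)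

lemma symm_part_sym: "transpose M = M \<Longrightarrow> symm_part M = (M::real^'n^'n)"
  unfolding symm_part_def by (simp add: vec_eq_iff)

lemma scaleR_mat_mulv: "(c *\<^sub>R M) *v x = c *\<^sub>R ((M::real^'n^'m) *v x)"
  by (simp add: vec_eq_iff matrix_vector_mult_def sum_distrib_left mult_ac)

lemma partA:
  fixes alpha beta phi :: "real^'n"
  assumes alpha_pos: "\<forall>i. alpha$i > 0" and beta_pos: "\<forall>i. beta$i > 0"
    and beta_sum: "(\<Sum>i\<in>UNIV. beta$i) = 1" and phi_pos: "\<forall>i. phi$i > 0"
    and b: "\<forall>i. beta$i = 1 / real CARD('n)"
  shows "Amat alpha beta phi = (1 / (real CARD('n))^2) *\<^sub>R Atilde alpha phi \<and>
        omega_star Sig mu alpha beta phi =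
          gmv Sig + (ones \<bullet> (matrix_inv (symm_part (Atilde alpha phi)) *v ones)) *\<^sub>R (Qmat Sig *v mu)"
proof -
  define N where "N = real CARD('n)"
  have N0: "N > 0" unfolding N_def by simp
  have pb: "phibar beta phi = (1/N) * (\<Sum>k\<in>UNIV. phi$k)"
    unfolding phibar_def N_def using b by (simp add: sum_distrib_left)
  have AA: "Amat alpha beta phi = (1 / N^2) *\<^sub>R Atilde alpha phi"
    unfolding vec_eq_iff using N0
    by (auto simp: Amat_entry Atilde_entry b pb N_def[symmetric] field_simps power2_eq_square)
  define SA where "SA = symm_part (Amat alpha beta phi)"
  define ST where "ST = symm_part (Atilde alpha phi)"
  have SA: "SA = (1/N^2) *\<^sub>R ST" unfolding SA_def ST_def AA symm_part_scale ..
  have invA: "invertible SA" unfolding SA_def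
    by (rule pd_invertible) (simp add: quad_symm quad_pos[OF alpha_pos beta_pos phi_pos])
  have ST: "ST = N^2 *\<^sub>R SA" using SA N0 by simp
  have invT: "invertible ST" unfolding ST using N0 invA by (simp add: scalar_invertible)
  define z where "z = matrix_inv ST *v ones"
  have Tz: "ST *v z = ones" unfolding z_def
    by (simp add: matrix_vector_mul_assoc matrix_inv_props(1)[OF invT])
  have bb: "beta = (1/N) *\<^sub>R ones" unfolding vec_eq_iff by (simp add: b ones_def N_def)
  have "SA *v (N *\<^sub>R z) = beta"
    unfolding SA bb using Tz N0
    by (simp add: scaleR_mat_mulv matrix_vector_mult_scaleR power2_eq_square)
  then have "matrix_inv SA *v beta = N *\<^sub>R z" by (rule matrix_inv_solve[OF invA])
  then have "beta \<bullet> (matrix_inv SA *v beta) = ones \<bullet> z"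
    unfolding bb using N0 by simp
  then show ?thesis
    using omega_star_eq[OF beta_sum, of Sig mu alpha phi] AA
    unfolding SA_def z_def ST_def N_def by simp
qed



lemma phibar_const: "(\<forall>i. phi$i = ph) \<Longrightarrow> (\<Sum>i\<in>UNIV. beta$i) = 1 \<Longrightarrow> phibar beta phi = ph"
  unfolding phibar_def by (simp add: sum_distrib_right[symmetric])

lemma Amat_sym: "(\<forall>i. phi$i = ph) \<Longrightarrow> transpose (Amat alpha beta phi) = Amat alpha beta phi"
  by (simp add: vec_eq_iff transpose_def Amat_entry mult_ac)

lemma partB:
  fixes alpha beta phi :: "real^'n"
  assumes alpha_pos: "\<forall>i. alpha$i > 0" and beta_pos: "\<forall>i. beta$i > 0"
    and beta_sum: "(\<Sum>i\<in>UNIV. beta$i) = 1" and phi_pos: "\<forall>i. phi$i > 0"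
    and p: "\<forall>i. phi$i = ph"
  shows "Amat alpha beta phi = (diagm alpha + ph *\<^sub>R mat 1) ** diagm beta - ph *\<^sub>R outer beta beta \<and>
        sym_pos_def (Amat alpha beta phi) \<and>
        omega_star Sig mu alpha beta phi =
          gmv Sig + (beta \<bullet> (matrix_inv (Amat alpha beta phi) *v beta)) *\<^sub>R (Qmat Sig *v mu)"
proof -
  have pb: "phibar beta phi = ph" by (rule phibar_const[OF p beta_sum])
  have "Amat alpha beta phi = (diagm alpha + ph *\<^sub>R mat 1) ** diagm beta - ph *\<^sub>R outer beta beta"
    unfolding vec_eq_iff using p
    by (simp add: Amat_entry pb matrix_matrix_mult_def diagm_def outer_def mat_def
        mult_delta_left mult_delta_right sum.distrib sum.delta algebra_simps)
  moreover have "sym_pos_def (Amat alpha beta phi)"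
    unfolding sym_pos_def_def using Amat_sym[OF p] quad_pos[OF alpha_pos beta_pos phi_pos] by blast
  moreover have "omega_star Sig mu alpha beta phi =
          gmv Sig + (beta \<bullet> (matrix_inv (Amat alpha beta phi) *v beta)) *\<^sub>R (Qmat Sig *v mu)"
    using omega_star_eq[OF beta_sum, of Sig mu alpha phi] symm_part_sym[OF Amat_sym[OF p]] by simp
  ultimately show ?thesis by blast
qed

lemma partC:
  fixes alpha beta phi :: "real^'n"
  assumes alpha_pos: "\<forall>i. alpha$i > 0" and beta_pos: "\<forall>i. beta$i > 0"
    and beta_sum: "(\<Sum>i\<in>UNIV. beta$i) = 1" and phi_pos: "\<forall>i. phi$i > 0"
    and p: "\<forall>i. phi$i = ph" and a: "\<forall>i. alpha$i = a"
  shows "omega_star Sig mu alpha beta phi = omega_f Sig mu alpha beta \<and>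
        omega_star Sig mu alpha beta phi = gmv Sig + inverse a *\<^sub>R (Qmat Sig *v mu)"
proof -
  obtain i0 :: 'n where True by blast
  have a0: "a > 0" using alpha_pos a by metis
  have pb: "phibar beta phi = ph" by (rule phibar_const[OF p beta_sum])
  have bo: "beta \<bullet> ones = 1" using beta_sum by (simp add: ones_def inner_vec_def)
  have ob: "ones \<bullet> beta = 1" using beta_sum by (simp add: ones_def inner_vec_def)
  have invA: "invertible (Amat alpha beta phi)"
    by (rule pd_invertible) (simp add: quad_pos[OF alpha_pos beta_pos phi_pos])
  have "Amat alpha beta phi *v ((1/a) *\<^sub>R ones) = beta"
    unfolding Amat_mulv vec_eq_iff using p a a0 bo
    by (simp add: pb ones_def field_simps inner_scaleR_right)
  then have "matrix_inv (Amat alpha beta phi) *v beta = (1/a) *\<^sub>R ones"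
    by (rule matrix_inv_solve[OF invA])
  then have e: "beta \<bullet> (matrix_inv (symm_part (Amat alpha beta phi)) *v beta) = inverse a"
    using symm_part_sym[OF Amat_sym[OF p]] bo by (simp add: divide_inverse)
  have ane: "\<And>i. alpha$i \<noteq> 0" using alpha_pos by (metis less_irrefl)
  have "invertible (diagm alpha)"
    unfolding invertible_def
    by (rule exI[of _ "diagm (\<chi> i. 1 / alpha$i)"])
       (use ane in \<open>simp add: vec_eq_iff diagm_def matrix_matrix_mult_def mat_def
          mult_delta_left mult_delta_right sum.delta\<close>)
  moreover have "diagm alpha *v ((1/a) *\<^sub>R beta) = beta"
    using a a0 by (simp add: vec_eq_iff diagm_def matrix_vector_mult_def mult_delta_left if_distrib[of "\<lambda>x. x / a"] sum.delta cong: if_cong)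
  ultimately have "matrix_inv (diagm alpha) *v beta = (1/a) *\<^sub>R beta" by (rule matrix_inv_solve)
  then have "alpha_f alpha beta = a" unfolding alpha_f_def using ob by simp
  then show ?thesis
    unfolding omega_f_def using omega_star_eq[OF beta_sum, of Sig mu alpha phi] e by simp
qed


theorem corollary1:
  fixes Sig :: "real^'k^'k" and mu :: "real^'k"
    and alpha beta phi :: "real^'n"
  assumes k2: "CARD('k) \<ge> 2"
    and n2: "CARD('n) \<ge> 2"
    and Sigma_spd: "sym_pos_def Sig"
    and alpha_pos: "\<forall>i. alpha$i > 0"
    and beta_pos: "\<forall>i. beta$i > 0"
    and beta_sum: "(\<Sum>i\<in>UNIV. beta$i) = 1"
    and phi_pos: "\<forall>i. phi$i > 0"
  shows
    "((\<forall>i j. i \<noteq> j \<longrightarrow> alpha$i \<noteq> alpha$j) \<and> (\<forall>i. beta$i = 1 / real CARD('n)) \<longrightarrow>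
        Amat alpha beta phi = (1 / (real CARD('n))^2) *\<^sub>R Atilde alpha phi \<and>
        omega_star Sig mu alpha beta phi =
          gmv Sig + (ones \<bullet> (matrix_inv (symm_part (Atilde alpha phi)) *v ones)) *\<^sub>R (Qmat Sig *v mu))
     \<and>
     (\<forall>ph. (\<forall>i j. i \<noteq> j \<longrightarrow> alpha$i \<noteq> alpha$j) \<and> ph > 0 \<and> (\<forall>i. phi$i = ph) \<longrightarrow>
        Amat alpha beta phi = (diagm alpha + ph *\<^sub>R mat 1) ** diagm beta - ph *\<^sub>R outer beta beta \<and>
        sym_pos_def (Amat alpha beta phi) \<and>
        omega_star Sig mu alpha beta phi =
          gmv Sig + (beta \<bullet> (matrix_inv (Amat alpha beta phi) *v beta)) *\<^sub>R (Qmat Sig *v mu))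
     \<and>
     (\<forall>a ph. (\<forall>i. alpha$i = a) \<and> (\<forall>i. phi$i = ph) \<longrightarrow>
        omega_star Sig mu alpha beta phi = omega_f Sig mu alpha beta \<and>
        omega_star Sig mu alpha beta phi = gmv Sig + inverse a *\<^sub>R (Qmat Sig *v mu))"
  proof (rule conjI[OF impI conjI[OF allI[OF impI] allI[OF allI[OF impI]]]])
  assume "(\<forall>i j. i \<noteq> j \<longrightarrow> alpha$i \<noteq> alpha$j) \<and> (\<forall>i. beta$i = 1 / real CARD('n))"
  then have b: "\<forall>i. beta$i = 1 / real CARD('n)" by blast
  show "Amat alpha beta phi = (1 / (real CARD('n))^2) *\<^sub>R Atilde alpha phi \<and>
        omega_star Sig mu alpha beta phi =
          gmv Sig + (ones \<bullet> (matrix_inv (symm_part (Atilde alpha phi)) *v ones)) *\<^sub>R (Qmat Sig *v mu)"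
    by (rule partA[OF alpha_pos beta_pos beta_sum phi_pos]) (rule b)
next
  fix ph assume h: "(\<forall>i j. i \<noteq> j \<longrightarrow> alpha$i \<noteq> alpha$j) \<and> ph > 0 \<and> (\<forall>i. phi$i = ph)"
  show "Amat alpha beta phi = (diagm alpha + ph *\<^sub>R mat 1) ** diagm beta - ph *\<^sub>R outer beta beta \<and>
        sym_pos_def (Amat alpha beta phi) \<and>
        omega_star Sig mu alpha beta phi =
          gmv Sig + (beta \<bullet> (matrix_inv (Amat alpha beta phi) *v beta)) *\<^sub>R (Qmat Sig *v mu)"
    by (rule partB[OF alpha_pos beta_pos beta_sum phi_pos]) (use h in blast)
next
  fix a ph assume h: "(\<forall>i. alpha$i = a) \<and> (\<forall>i. phi$i = ph)"
  show "omega_star Sig mu alpha beta phi = omega_f Sig mu alpha beta \<and>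
        omega_star Sig mu alpha beta phi = gmv Sig + inverse a *\<^sub>R (Qmat Sig *v mu)"
    by (rule partC[OF alpha_pos beta_pos beta_sum phi_pos]) (use h in blast)+
qed

end
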